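(* Let $A\in\mathbb{R}^{l_1\times n}$, let $x^{(2)}_1,\dots,x^{(2)}_{l_2}\in\mathbb{R}^n$ and $x^{(3)}_1,\dots,x^{(3)}_{l_3}\in\mathbb{R}^n$, let $0<\epsilon<1$, $\delta>0$, $A^{*}=(A^TA+\delta I)^{-1}$, and for $p\ge 1$ let $e_p\in\mathbb{R}^p$ be the all-ones vector. For $\lambda>0$ and multipliers $(\alpha_0,\alpha,\beta)\in\mathbb{R}\times[0,1]^{l_2}\times[0,1]^{l_3}$ put $$w_1=-\frac{1}{\lambda}A^{*}\Big(\alpha_0A^Te_{l_1}+\sum_{i=1}^{l_2}\alpha_i x^{(2)}_i+\sum_{k=1}^{l_3}\beta_k x^{(3)}_k\Big),\qquad b_1=\frac{\alpha_0}{\lambda},\qquad f_1(x)=x^Tw_1+b_1 .$$ Let $\lambda\mapsto(\alpha_0(\lambda),\alpha(\lambda),\beta(\lambda))$ be a solution path of the first QPP, i.e. for every $\lambda>0$ it satisfies, with $w_1,b_1,f_1$ built from $(\lambda,\alpha_0(\lambda),\alpha(\lambda),\beta(\lambda))$: (a) $\alpha_i(\lambda)=1$ if $-f_1(x^{(2)}_i)<1$, $\alpha_i(\lambda)=0$ if $-f_1(x^{(2)}_i)>1$, $\alpha_i(\lambda)\in[0,1]$ if $-f_1(x^{(2)}_i)=1$; (b) $\beta_k(\lambda)=1$ if $-f_1(x^{(3)}_k)<1-\epsilon$, $\beta_k(\lambda)=0$ if $-f_1(x^{(3)}_k)>1-\epsilon$, $\beta_k(\lambda)\in[0,1]$ if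 $-f_1(x^{(3)}_k)=1-\epsilon$; (c) $(l_1-e_{l_1}^TAA^{*}A^Te_{l_1})\alpha_0+\sum_{i=1}^{l_2}(1-e_{l_1}^TAA^{*}x^{(2)}_i)\alpha_i+\sum_{k=1}^{l_3}(1-e_{l_1}^TAA^{*}x^{(3)}_k)\beta_k=0$. Let $\lambda^{l}>\lambda^{l+1}>0$ be such that the index sets $\mathcal{E}_B(\lambda)=\{i:-f_1(x^{(2)}_i)=1\}$, $\mathcal{L}_B(\lambda)=\{i:-f_1(x^{(2)}_i)<1\}$, $\mathcal{R}_B(\lambda)=\{i:-f_1(x^{(2)}_i)>1\}$, $\mathcal{E}_C(\lambda)=\{k:-f_1(x^{(3)}_k)=1-\epsilon\}$, $\mathcal{L}_C(\lambda)=\{k:-f_1(x^{(3)}_k)<1-\epsilon\}$, $\mathcal{R}_C(\lambda)=\{k:-f_1(x^{(3)}_k)>1-\epsilon\}$ are constant for $\lambda\in(\lambda^{l+1},\lambda^{l}]$; denote them $\mathcal{E}^{1,l}_B,\mathcal{L}^{1,l}_B,\mathcal{R}^{1,l}_B,\mathcal{E}^{1,l}_C,\mathcal{L}^{1,l}_C,\mathcal{R}^{1,l}_C$, and denote by $\alpha_0^l,\alpha_i^l,\beta_k^l,w_1^l,f_1^l$ the values at $\lambda=\lambda^l$. Let $m_1=|\mathcal{E}^{1,l}_B|$, $m_2=|\mathcal{E}^{1,l}_C|$, let $X_B\in\mathbb{R}^{m_1\times n}$ (resp. $X_C\in\mathbb{R}^{m_2\times n}$) have rows $(x^{(2)}_i)^T$,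 $i\in\mathcal{E}^{1,l}_B$ (resp. $(x^{(3)}_k)^T$, $k\in\mathcal{E}^{1,l}_C$), and define $$\bar A^l=\begin{pmatrix} l_1-e_{l_1}^TAA^{*}A^Te_{l_1} & e_{m_1}^T-e_{l_1}^TAA^{*}X_B^T & e_{m_2}^T-e_{l_1}^TAA^{*}X_C^T\\ -e_{m_1}+X_BA^{*}A^Te_{l_1} & X_BA^{*}X_B^T & X_BA^{*}X_C^T\\ -e_{m_2}+X_CA^{*}A^Te_{l_1} & X_CA^{*}X_B^T & X_CA^{*}X_C^T\end{pmatrix},\qquad \bar b=\begin{pmatrix}0\\ e_{m_1}\\ (1-\epsilon)e_{m_2}\end{pmatrix}.$$ Assume $\bar A^l$ is invertible and write $(\bar A^l)^{-1}\bar b=(\vartheta_0^l,(\vartheta_i^l)_{i\in\mathcal{E}^{1,l}_B},(\nu_k^l)_{k\in\mathcal{E}^{1,l}_C})$ (entries in the order of the rows of $X_B$, $X_C$). Then for every $\lambda$ with $\lambda^{l}>\lambda>\lambda^{l+1}$: $\alpha_0(\lambda)=\alpha_0^l-(\lambda^l-\lambda)\vartheta_0^l$; $\alpha_i(\lambda)=\alpha_i^l-(\lambda^l-\lambda)\vartheta_i^l$ for $i\in\mathcal{E}^{1,l}_B$; $\beta_k(\lambda)=\beta_k^l-(\lambda^l-\lambda)\nu_k^l$ for $k\in\mathcal{E}^{1,l}_C$; so these are piecewise linear in $\lambda$. Moreover $$w_1=\frac{\lambda^l}{\lambda}(w_1^l+h_1^l)-h_1^l,\qquad f_1(x)=\frac{\lambda^l}{\lambda}\big(f_1^l(x)-h_2^l(x)\big)+h_2^l(x),$$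 so $w_1$ and $f_1$ are piecewise linear in $1/\lambda$, where $h_1^l=A^{*}\big(\vartheta_0^lA^Te_{l_1}+\sum_{i\in\mathcal{E}^{1,l}_B}\vartheta_i^lx^{(2)}_i+\sum_{k\in\mathcal{E}^{1,l}_C}\nu_k^lx^{(3)}_k\big)$ and $h_2^l(x)=\vartheta_0^l-x^Th_1^l$.
   Context: This concerns the first of the two quadratic programs of the twin multi-class support vector machine: given class-$+1$ samples (rows of $A$), class-$-1$ samples $x^{(2)}_i$ and remaining samples $x^{(3)}_k$, solve $\min_{w_1,b_1,\xi,\eta}\ \frac{\lambda}{2}\|Aw_1+b_1e_{l_1}\|^2+\sum_i\xi_i+\sum_k\eta_k$ subject to $-(w_1^Tx^{(2)}_i+b_1)+\xi_i\ge 1$, $-(w_1^Tx^{(3)}_k+b_1)+\eta_k\ge 1-\epsilon$, $\xi,\eta\ge 0$, where $\lambda=1/c_1$ is the regularization parameter; $\alpha_i,\beta_k$ are the Lagrange multipliers of the two families of inequality constraints and $\alpha_0=\lambda b_1$. Following the paper, the hyperplane is expressed in terms of the multipliers by the displayed formula for $w_1$ with the regularized inverse $A^{*}$, conditions (a)–(b) are the KKT complementarity relations and (c) is the stationarity condition in $b_1$ combined with that expression for $w_1$. The values $\lambda^l$ are consecutive breakpoints ("events") of the path, i.e. values at which one of the index sets changes. *)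

theory Defs
  imports "Jordan_Normal_Form.Matrix"
begin

text \<open>Vectors of R^p are rendered as Jordan_Normal_Form vectors of dimension p
  ('real vec'), matrices as 'real mat' (dimensions are values, so matrices whose
  size depends on index sets can be formed).\<close>

definition ones :: "nat \<Rightarrow> real vec" where
  "ones p = vec p (\<lambda>_. 1)"

definition ones_col :: "nat \<Rightarrow> real mat" where
  "ones_col p = mat p 1 (\<lambda>_. 1)"

text \<open>Matrix inverse (the two-sided inverse; meaningful for invertible matrices).\<close>
definition mat_inv :: "real mat \<Rightarrow> real mat" where
  "mat_inv M = (SOME B. B \<in> carrier_mat (dim_row M) (dim_row M) \<and> inverts_mat M B \<and> inverts_mat B M)"

definition vsum :: "nat \<Rightarrow> 'i set \<Rightarrow> ('i \<Rightarrow> real vec) \<Rightarrow> real vec" where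
  "vsum n I f = vec n (\<lambda>j. \<Sum>i\<in>I. f i $ j)"

definition Astar :: "real mat \<Rightarrow> real \<Rightarrow> real mat" where
  "Astar A \<delta> = mat_inv (transpose_mat A * A + \<delta> \<cdot>\<^sub>m 1\<^sub>m (dim_col A))"

definition w1 :: "real mat \<Rightarrow> real \<Rightarrow> (nat \<Rightarrow> real vec) \<Rightarrow> nat \<Rightarrow> (nat \<Rightarrow> real vec) \<Rightarrow> nat
    \<Rightarrow> real \<Rightarrow> real \<Rightarrow> (nat \<Rightarrow> real) \<Rightarrow> (nat \<Rightarrow> real) \<Rightarrow> real vec" where
  "w1 A \<delta> x2 l2 x3 l3 lam a0 \<alpha> \<beta> =
     (- (1 / lam)) \<cdot>\<^sub>v (Astar A \<delta> *\<^sub>v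
        (a0 \<cdot>\<^sub>v (transpose_mat A *\<^sub>v ones (dim_row A))
         + vsum (dim_col A) {..<l2} (\<lambda>i. \<alpha> i \<cdot>\<^sub>v x2 i)
         + vsum (dim_col A) {..<l3} (\<lambda>k. \<beta> k \<cdot>\<^sub>v x3 k)))"

definition b1 :: "real \<Rightarrow> real \<Rightarrow> real" where
  "b1 lam a0 = a0 / lam"

definition f1 :: "real mat \<Rightarrow> real \<Rightarrow> (nat \<Rightarrow> real vec) \<Rightarrow> nat \<Rightarrow> (nat \<Rightarrow> real vec) \<Rightarrow> nat
    \<Rightarrow> real \<Rightarrow> real \<Rightarrow> (nat \<Rightarrow> real) \<Rightarrow> (nat \<Rightarrow> real) \<Rightarrow> real vec \<Rightarrow> real" where
  "f1 A \<delta> x2 l2 x3 l3 lam a0 \<alpha> \<beta> x = x \<bullet> w1 A \<delta> x2 l2 x3 l3 lam a0 \<alpha> \<beta> + b1 lam a0"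

definition kkt_QPP1 :: "real mat \<Rightarrow> real \<Rightarrow> real \<Rightarrow> (nat \<Rightarrow> real vec) \<Rightarrow> nat \<Rightarrow> (nat \<Rightarrow> real vec) \<Rightarrow> nat
    \<Rightarrow> real \<Rightarrow> real \<Rightarrow> (nat \<Rightarrow> real) \<Rightarrow> (nat \<Rightarrow> real) \<Rightarrow> bool" where
  "kkt_QPP1 A \<delta> \<epsilon> x2 l2 x3 l3 lam a0 \<alpha> \<beta> \<longleftrightarrow>
     (let F = f1 A \<delta> x2 l2 x3 l3 lam a0 \<alpha> \<beta>; l1 = dim_row A; As = Astar A \<delta> in
       (\<forall>i<l2. \<alpha> i \<in> {0..1}) \<and> (\<forall>k<l3. \<beta> k \<in> {0..1}) \<and>
       (\<forall>i<l2. (- F (x2 i) < 1 \<longrightarrow> \<alpha> i = 1) \<and> (- F (x2 i) > 1 \<longrightarrow> \<alpha> i = 0)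
               \<and> (- F (x2 i) = 1 \<longrightarrow> \<alpha> i \<in> {0..1})) \<and>
       (\<forall>k<l3. (- F (x3 k) < 1 - \<epsilon> \<longrightarrow> \<beta> k = 1) \<and> (- F (x3 k) > 1 - \<epsilon> \<longrightarrow> \<beta> k = 0)
               \<and> (- F (x3 k) = 1 - \<epsilon> \<longrightarrow> \<beta> k \<in> {0..1})) \<and>
       (real l1 - ones l1 \<bullet> (A *\<^sub>v (As *\<^sub>v (transpose_mat A *\<^sub>v ones l1)))) * a0
        + (\<Sum>i<l2. (1 - ones l1 \<bullet> (A *\<^sub>v (As *\<^sub>v x2 i))) * \<alpha> i)
        + (\<Sum>k<l3. (1 - ones l1 \<bullet> (A *\<^sub>v (As *\<^sub>v x3 k))) * \<beta> k) = 0)"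

definition E_B :: "(real vec \<Rightarrow> real) \<Rightarrow> (nat \<Rightarrow> real vec) \<Rightarrow> nat \<Rightarrow> nat set" where
  "E_B F x2 l2 = {i. i < l2 \<and> - F (x2 i) = 1}"
definition L_B :: "(real vec \<Rightarrow> real) \<Rightarrow> (nat \<Rightarrow> real vec) \<Rightarrow> nat \<Rightarrow> nat set" where
  "L_B F x2 l2 = {i. i < l2 \<and> - F (x2 i) < 1}"
definition R_B :: "(real vec \<Rightarrow> real) \<Rightarrow> (nat \<Rightarrow> real vec) \<Rightarrow> nat \<Rightarrow> nat set" where
  "R_B F x2 l2 = {i. i < l2 \<and> - F (x2 i) > 1}"
definition E_C :: "real \<Rightarrow> (real vec \<Rightarrow> real) \<Rightarrow> (nat \<Rightarrow> real vec) \<Rightarrow> nat \<Rightarrow> nat set" where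
  "E_C \<epsilon> F x3 l3 = {k. k < l3 \<and> - F (x3 k) = 1 - \<epsilon>}"
definition L_C :: "real \<Rightarrow> (real vec \<Rightarrow> real) \<Rightarrow> (nat \<Rightarrow> real vec) \<Rightarrow> nat \<Rightarrow> nat set" where
  "L_C \<epsilon> F x3 l3 = {k. k < l3 \<and> - F (x3 k) < 1 - \<epsilon>}"
definition R_C :: "real \<Rightarrow> (real vec \<Rightarrow> real) \<Rightarrow> (nat \<Rightarrow> real vec) \<Rightarrow> nat \<Rightarrow> nat set" where
  "R_C \<epsilon> F x3 l3 = {k. k < l3 \<and> - F (x3 k) > 1 - \<epsilon>}"

definition hcat :: "real mat \<Rightarrow> real mat \<Rightarrow> real mat" where
  "hcat M N = four_block_mat M N (0\<^sub>m 0 (dim_col M)) (0\<^sub>m 0 (dim_col N))"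

definition Abar :: "real mat \<Rightarrow> real \<Rightarrow> real mat \<Rightarrow> real mat \<Rightarrow> real mat" where
  "Abar A \<delta> XB XC =
    (let l1 = dim_row A; m1 = dim_row XB; m2 = dim_row XC; As = Astar A \<delta>;
         E = ones_col l1; eT = transpose_mat E; E1 = ones_col m1; E2 = ones_col m2;
         AT = transpose_mat A; XBT = transpose_mat XB; XCT = transpose_mat XC in
      hcat (mat 1 1 (\<lambda>_. real l1) - eT * A * As * AT * E)
           (hcat (transpose_mat E1 - eT * A * As * XBT) (transpose_mat E2 - eT * A * As * XCT))
      @\<^sub>r
      hcat (- E1 + XB * As * AT * E) (hcat (XB * As * XBT) (XB * As * XCT))
      @\<^sub>r
      hcat (- E2 + XC * As * AT * E) (hcat (XC * As * XBT) (XC * As * XCT)))"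

definition bbar :: "real \<Rightarrow> nat \<Rightarrow> nat \<Rightarrow> real vec" where
  "bbar \<epsilon> m1 m2 = vec 1 (\<lambda>_. 0) @\<^sub>v ones m1 @\<^sub>v ((1 - \<epsilon>) \<cdot>\<^sub>v ones m2)"

end

theory Submission
  imports Defs "Jordan_Normal_Form.Determinant"
begin


lemma sum_split3:
  "(\<Sum>c<Suc (m1+m2). f c) = f 0 + (\<Sum>t<m1. f (Suc t)) + (\<Sum>t<m2. f (Suc (m1+t)))"
proof -
  have aux: "(\<Sum>c<m1+m2. f (Suc c)) = (\<Sum>t<m1. f (Suc t)) + (\<Sum>t<m2. f (Suc (m1+t)))"
    by (induct m2) (auto simp: add_ac)
  have "(\<Sum>c<Suc (m1+m2). f c) = f 0 + (\<Sum>c<m1+m2. f (Suc c))" by (rule sum.lessThan_Suc_shift)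
  also have "\<dots> = f 0 + (\<Sum>t<m1. f (Suc t)) + (\<Sum>t<m2. f (Suc (m1+t)))" unfolding aux by (simp add: add.assoc)
  finally show ?thesis .
qed

lemma sum_nth_set: "distinct xs \<Longrightarrow> (\<Sum>t<length xs. f (xs!t)) = (\<Sum>x\<in>set xs. f x)"
  using sum.reindex_bij_betw[OF bij_betw_nth[of xs "{..<length xs}" "set xs"], of f] by simp

lemma smult_one_mat_vec: "v \<in> carrier_vec n \<Longrightarrow> (k \<cdot>\<^sub>m 1\<^sub>m n) *\<^sub>v v = (k::real) \<cdot>\<^sub>v v"
proof (intro eq_vecI)
  fix i assume v: "v \<in> carrier_vec n" and i: "i < dim_vec (k \<cdot>\<^sub>v v)"
  have "((k \<cdot>\<^sub>m 1\<^sub>m n) *\<^sub>v v) $ i = (\<Sum>j<n. (if i = j then k else 0) * v $ j)"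
    using v i by (auto simp: mult_mat_vec_def scalar_prod_def atLeast0LessThan intro!: sum.cong)
  also have "\<dots> = (\<Sum>j<n. if i = j then k * v $ j else 0)" by (rule sum.cong[OF refl], rename_tac j, case_tac "i = j", simp_all)
  also have "\<dots> = k * v $ i" using i v by (simp add: sum.delta)
  finally show "((k \<cdot>\<^sub>m 1\<^sub>m n) *\<^sub>v v) $ i = (k \<cdot>\<^sub>v v) $ i" using i by simp
qed (auto)

lemma astar_carrier_gen:
  assumes "\<delta> > 0" and A: "A \<in> carrier_mat m n"
  shows "Astar A \<delta> \<in> carrier_mat n n"
proof -
  define M where "M = transpose_mat A * A + \<delta> \<cdot>\<^sub>m 1\<^sub>m n"
  have c1: "transpose_mat A * A \<in> carrier_mat n n" using A by (intro mult_carrier_mat[of _ n m]) simp_all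
  have c2: "\<delta> \<cdot>\<^sub>m 1\<^sub>m n \<in> carrier_mat n n" by simp
  have M: "M \<in> carrier_mat n n" unfolding M_def using c1 c2 by simp
  have "det M \<noteq> 0"
  proof
    assume "det M = 0"
    then obtain v where v: "v \<in> carrier_vec n" "v \<noteq> 0\<^sub>v n" "M *\<^sub>v v = 0\<^sub>v n"
      using det_0_iff_vec_prod_zero_field[OF M] by blast
    have Av: "A *\<^sub>v v \<in> carrier_vec m" using A v(1) by simp
    have "M *\<^sub>v v = (transpose_mat A * A) *\<^sub>v v + (\<delta> \<cdot>\<^sub>m 1\<^sub>m n) *\<^sub>v v"
      unfolding M_def by (rule add_mult_distrib_mat_vec[OF c1 c2 v(1)])
    also have "(transpose_mat A * A) *\<^sub>v v = transpose_mat A *\<^sub>v (A *\<^sub>v v)"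
      by (rule assoc_mult_mat_vec[of _ n m _ n]) (use A v(1) in simp_all)
    also have "(\<delta> \<cdot>\<^sub>m 1\<^sub>m n) *\<^sub>v v = \<delta> \<cdot>\<^sub>v v" by (rule smult_one_mat_vec[OF v(1)])
    finally have Mv: "M *\<^sub>v v = transpose_mat A *\<^sub>v (A *\<^sub>v v) + \<delta> \<cdot>\<^sub>v v" .
    have c3: "transpose_mat A *\<^sub>v (A *\<^sub>v v) \<in> carrier_vec n"
      using mult_mat_vec_carrier[of "transpose_mat A" n m "A *\<^sub>v v"] A Av by simp
    have c4: "\<delta> \<cdot>\<^sub>v v \<in> carrier_vec n" using v(1) by simp
    have "v \<bullet> (M *\<^sub>v v) = v \<bullet> (transpose_mat A *\<^sub>v (A *\<^sub>v v)) + v \<bullet> (\<delta> \<cdot>\<^sub>v v)"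
      unfolding Mv by (rule scalar_prod_add_distrib[OF v(1) c3 c4])
    hence "0 = v \<bullet> (transpose_mat A *\<^sub>v (A *\<^sub>v v)) + \<delta> * (v \<bullet> v)"
      using v by simp
    also have "v \<bullet> (transpose_mat A *\<^sub>v (A *\<^sub>v v)) = (A *\<^sub>v v) \<bullet> (A *\<^sub>v v)"
      using transpose_vec_mult_scalar[OF A v(1) Av] comm_scalar_prod[OF v(1) c3] by simp
    finally have eq: "0 = (A *\<^sub>v v) \<bullet> (A *\<^sub>v v) + \<delta> * (v \<bullet> v)" .
    have ge: "w \<bullet> w \<ge> 0" for w :: "real vec"
      unfolding scalar_prod_def by (auto intro: sum_nonneg)
    obtain i where i: "i < n" "v $ i \<noteq> 0"
    proof -
      have "\<exists>i<n. v $ i \<noteq> 0"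
      proof (rule ccontr)
        assume "\<not> ?thesis"
        hence "v = 0\<^sub>v n" using v(1) by (intro eq_vecI) auto
        with v(2) show False by simp
      qed
      thus ?thesis using that by blast
    qed
    have "v \<bullet> v \<ge> v $ i * v $ i"
      unfolding scalar_prod_def using v(1) i
      by (intro member_le_sum) auto
    moreover have "v $ i * v $ i > 0" using i(2) by (metis linorder_neqE_linordered_idom mult_pos_pos mult_neg_neg)
    ultimately have "v \<bullet> v > 0" by linarith
    hence "\<delta> * (v \<bullet> v) > 0" using assms by simp
    with eq ge[of "A *\<^sub>v v"] show False by linarith
  qed
  from det_non_zero_imp_unit[OF M this, of "()"]
  obtain B where B: "B \<in> carrier_mat n n" "B * M = 1\<^sub>m n" "M * B = 1\<^sub>m n"
    unfolding Units_def ring_mat_def by auto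
  have ex: "\<exists>B. B \<in> carrier_mat (dim_row M) (dim_row M) \<and> inverts_mat M B \<and> inverts_mat B M"
    using B M by (intro exI[of _ B]) (auto simp: inverts_mat_def)
  have "Astar A \<delta> = mat_inv M" unfolding Astar_def M_def using A by simp
  then show ?thesis
    using someI_ex[OF ex] M unfolding mat_inv_def by auto
qed



lemma ch3: assumes "P \<in> carrier_mat a k1" "Q \<in> carrier_mat k1 k2" "R \<in> carrier_mat k2 b" "i < a" "j < b"
  shows "(P * Q * R) $$ (i,j) = row P i \<bullet> (Q *\<^sub>v col R j)"
proof -
  have "P * Q * R = P * (Q * R)" using assms by (intro assoc_mult_mat) 
  moreover have "col (Q * R) j = Q *\<^sub>v col R j" using assms by (intro col_mult2)
  ultimately show ?thesis using assms by simp
qed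

lemma ch4: assumes "P \<in> carrier_mat a k1" "Q \<in> carrier_mat k1 k2" "R \<in> carrier_mat k2 k3"
  "S \<in> carrier_mat k3 b" "i < a" "j < b"
  shows "(P * Q * R * S) $$ (i,j) = row P i \<bullet> (Q *\<^sub>v (R *\<^sub>v col S j))"
proof -
  have QR: "Q * R \<in> carrier_mat k1 k3" using assms by simp
  have "P * Q * R * S = (P * Q) * (R * S)" using assms by (intro assoc_mult_mat[of "P*Q" a k2 R k3 S b]) simp_all
  also have "\<dots> = P * (Q * (R * S))" using assms by (intro assoc_mult_mat[of P a k1 Q k2 "R*S" b]) simp_all
  finally have e: "P * Q * R * S = P * (Q * (R * S))" .
  have "col (Q * (R * S)) j = Q *\<^sub>v col (R * S) j" using assms by (intro col_mult2[of _ _ k2]) simp_all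
  moreover have "col (R * S) j = R *\<^sub>v col S j" using assms by (intro col_mult2)
  moreover have "P * (Q * (R * S)) \<in> carrier_mat a b" using assms by simp
  ultimately show ?thesis unfolding e using assms by simp
qed

lemma ch5: assumes "P \<in> carrier_mat a k1" "Q \<in> carrier_mat k1 k2" "R \<in> carrier_mat k2 k3"
  "S \<in> carrier_mat k3 k4" "T \<in> carrier_mat k4 b" "i < a" "j < b"
  shows "(P * Q * R * S * T) $$ (i,j) = row P i \<bullet> (Q *\<^sub>v (R *\<^sub>v (S *\<^sub>v col T j)))"
proof -
  have "P * Q * R * S * T = (P * Q * R) * (S * T)" using assms by (intro assoc_mult_mat[of "P*Q*R" a k3 S k4 T b]) simp_all
  also have "\<dots> = (P * Q) * (R * (S * T))" using assms by (intro assoc_mult_mat[of "P*Q" a k2 R k3 "S*T" b]) simp_all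
  also have "\<dots> = P * (Q * (R * (S * T)))" using assms by (intro assoc_mult_mat[of P a k1 Q k2 "R*(S*T)" b]) simp_all
  finally have e: "P * Q * R * S * T = P * (Q * (R * (S * T)))" .
  have "col (Q * (R * (S * T))) j = Q *\<^sub>v col (R * (S * T)) j" using assms by (intro col_mult2[of _ _ k2]) simp_all
  moreover have "col (R * (S * T)) j = R *\<^sub>v col (S * T) j" using assms by (intro col_mult2[of _ _ k3]) simp_all
  moreover have "col (S * T) j = S *\<^sub>v col T j" using assms by (intro col_mult2)
  moreover have "P * (Q * (R * (S * T))) \<in> carrier_mat a b" using assms by simp
  ultimately show ?thesis unfolding e using assms by simp
qed

lemma mc3: "P \<in> carrier_mat a k1 \<Longrightarrow> Q \<in> carrier_mat k1 k2 \<Longrightarrow> R \<in> carrier_mat k2 b \<Longrightarrow> P * Q * R \<in> carrier_mat a b"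
  by (rule mult_carrier_mat[OF mult_carrier_mat])
lemma mc4: "P \<in> carrier_mat a k1 \<Longrightarrow> Q \<in> carrier_mat k1 k2 \<Longrightarrow> R \<in> carrier_mat k2 k3 \<Longrightarrow> S \<in> carrier_mat k3 b \<Longrightarrow> P * Q * R * S \<in> carrier_mat a b"
  by (rule mult_carrier_mat[OF mc3])
lemma mc5: "P \<in> carrier_mat a k1 \<Longrightarrow> Q \<in> carrier_mat k1 k2 \<Longrightarrow> R \<in> carrier_mat k2 k3 \<Longrightarrow> S \<in> carrier_mat k3 k4 \<Longrightarrow> T \<in> carrier_mat k4 b \<Longrightarrow> P * Q * R * S * T \<in> carrier_mat a b"
  by (rule mult_carrier_mat[OF mc4])

lemma hcat_carrier: "M \<in> carrier_mat r c1 \<Longrightarrow> N \<in> carrier_mat r c2 \<Longrightarrow> hcat M N \<in> carrier_mat r (c1 + c2)"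
  unfolding hcat_def carrier_mat_def by simp

lemma hcat_index: "M \<in> carrier_mat r c1 \<Longrightarrow> N \<in> carrier_mat r c2 \<Longrightarrow> i < r \<Longrightarrow> j < c1 + c2 \<Longrightarrow>
  hcat M N $$ (i,j) = (if j < c1 then M $$ (i,j) else N $$ (i, j - c1))"
  unfolding hcat_def carrier_mat_def by simp

lemma arows_index: "M \<in> carrier_mat r1 c \<Longrightarrow> N \<in> carrier_mat r2 c \<Longrightarrow> i < r1 + r2 \<Longrightarrow> j < c \<Longrightarrow>
  (M @\<^sub>r N) $$ (i,j) = (if i < r1 then M $$ (i,j) else N $$ (i - r1, j))"
  unfolding append_rows_def carrier_mat_def by simp

lemma ones_col_carrier: "ones_col p \<in> carrier_mat p 1" unfolding ones_col_def by simp
lemma col_ones_col: "col (ones_col p) 0 = ones p"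
  unfolding ones_col_def ones_def by (intro eq_vecI) auto
lemma ones_carrier: "ones p \<in> carrier_vec p" unfolding ones_def by simp

lemma Abar_entries:
  assumes A: "A \<in> carrier_mat l1 n" and As: "Astar A \<delta> \<in> carrier_mat n n"
    and XB: "XB \<in> carrier_mat m1 n" and XC: "XC \<in> carrier_mat m2 n"
  defines "g \<equiv> \<lambda>c. if c = 0 then transpose_mat A *\<^sub>v ones l1 else if c < Suc m1 then row XB (c - 1) else row XC (c - Suc m1)"
    and "p \<equiv> \<lambda>r. if r < Suc m1 then row XB (r - 1) else row XC (r - Suc m1)"
  shows "Abar A \<delta> XB XC \<in> carrier_mat (Suc (m1+m2)) (Suc (m1+m2))"
    and "c < Suc (m1+m2) \<Longrightarrow> Abar A \<delta> XB XC $$ (0,c) =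
          (if c = 0 then real l1 else 1) - ones l1 \<bullet> (A *\<^sub>v (Astar A \<delta> *\<^sub>v g c))"
    and "0 < r \<Longrightarrow> r < Suc (m1+m2) \<Longrightarrow> c < Suc (m1+m2) \<Longrightarrow> Abar A \<delta> XB XC $$ (r,c) =
          (if c = 0 then -1 else 0) + p r \<bullet> (Astar A \<delta> *\<^sub>v g c)"
proof -
  define As where "As = Astar A \<delta>"
  define E where "E = ones_col l1"
  define E1 where "E1 = ones_col m1"
  define E2 where "E2 = ones_col m2"
  define B11 where "B11 = mat 1 1 (\<lambda>_. real l1) - transpose_mat E * A * As * transpose_mat A * E"
  define B12 where "B12 = transpose_mat E1 - transpose_mat E * A * As * transpose_mat XB"
  define B13 where "B13 = transpose_mat E2 - transpose_mat E * A * As * transpose_mat XC"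
  define B21 where "B21 = - E1 + XB * As * transpose_mat A * E"
  define B22 where "B22 = XB * As * transpose_mat XB"
  define B23 where "B23 = XB * As * transpose_mat XC"
  define B31 where "B31 = - E2 + XC * As * transpose_mat A * E"
  define B32 where "B32 = XC * As * transpose_mat XB"
  define B33 where "B33 = XC * As * transpose_mat XC"
  have dims: "dim_row A = l1" "dim_row XB = m1" "dim_row XC = m2" using A XB XC by auto
  have Aeq: "Abar A \<delta> XB XC = hcat B11 (hcat B12 B13) @\<^sub>r hcat B21 (hcat B22 B23) @\<^sub>r hcat B31 (hcat B32 B33)"
    unfolding Abar_def Let_def dims B11_def B12_def B13_def B21_def B22_def B23_def B31_def B32_def B33_def
      As_def E_def E1_def E2_def ..
  have E: "E \<in> carrier_mat l1 1" "transpose_mat E \<in> carrier_mat 1 l1" unfolding E_def using ones_col_carrier by auto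
  have E1: "E1 \<in> carrier_mat m1 1" "transpose_mat E1 \<in> carrier_mat 1 m1" unfolding E1_def using ones_col_carrier by auto
  have E2: "E2 \<in> carrier_mat m2 1" "transpose_mat E2 \<in> carrier_mat 1 m2" unfolding E2_def using ones_col_carrier by auto
  have AT: "transpose_mat A \<in> carrier_mat n l1" using A by simp
  have XBT: "transpose_mat XB \<in> carrier_mat n m1" using XB by simp
  have XCT: "transpose_mat XC \<in> carrier_mat n m2" using XC by simp
  have Asc: "As \<in> carrier_mat n n" using As unfolding As_def .
  note cs = A As[folded As_def] XB XC E E1 E2 AT XBT XCT
  have c11: "B11 \<in> carrier_mat 1 1" unfolding B11_def by (rule minus_carrier_mat, rule mc5[OF E(2) A Asc AT E(1)])
  have c12: "B12 \<in> carrier_mat 1 m1" unfolding B12_def by (rule minus_carrier_mat, rule mc4[OF E(2) A Asc XBT])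
  have c13: "B13 \<in> carrier_mat 1 m2" unfolding B13_def by (rule minus_carrier_mat, rule mc4[OF E(2) A Asc XCT])
  have c21: "B21 \<in> carrier_mat m1 1" unfolding B21_def by (rule add_carrier_mat[OF mc4[OF XB Asc AT E(1)]])
  have c22: "B22 \<in> carrier_mat m1 m1" unfolding B22_def by (rule mc3[OF XB Asc XBT])
  have c23: "B23 \<in> carrier_mat m1 m2" unfolding B23_def by (rule mc3[OF XB Asc XCT])
  have c31: "B31 \<in> carrier_mat m2 1" unfolding B31_def by (rule add_carrier_mat[OF mc4[OF XC Asc AT E(1)]])
  have c32: "B32 \<in> carrier_mat m2 m1" unfolding B32_def by (rule mc3[OF XC Asc XBT])
  have c33: "B33 \<in> carrier_mat m2 m2" unfolding B33_def by (rule mc3[OF XC Asc XCT])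
  have r1: "hcat B11 (hcat B12 B13) \<in> carrier_mat 1 (Suc (m1+m2))"
    using hcat_carrier[OF c11 hcat_carrier[OF c12 c13]] by simp
  have r2: "hcat B21 (hcat B22 B23) \<in> carrier_mat m1 (Suc (m1+m2))"
    using hcat_carrier[OF c21 hcat_carrier[OF c22 c23]] by simp
  have r3: "hcat B31 (hcat B32 B33) \<in> carrier_mat m2 (Suc (m1+m2))"
    using hcat_carrier[OF c31 hcat_carrier[OF c32 c33]] by simp
  have r23: "hcat B21 (hcat B22 B23) @\<^sub>r hcat B31 (hcat B32 B33) \<in> carrier_mat (m1+m2) (Suc (m1+m2))"
    using r2 r3 by (rule carrier_append_rows)
  show "Abar A \<delta> XB XC \<in> carrier_mat (Suc (m1+m2)) (Suc (m1+m2))"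
    unfolding Aeq using carrier_append_rows[OF r1 r23] by simp
  have rowE: "row (transpose_mat E) 0 = ones l1" using E col_ones_col[of l1] unfolding E_def by simp
  have colE: "col E 0 = ones l1" unfolding E_def by (rule col_ones_col)
  have mi: "P \<in> carrier_mat a b \<Longrightarrow> i < a \<Longrightarrow> j < b \<Longrightarrow> (M - P) $$ (i,j) = M $$ (i,j) - P $$ (i,j)"
    for P M :: "real mat" and a b i j by (rule index_minus_mat) auto
  have pl: "P \<in> carrier_mat a b \<Longrightarrow> i < a \<Longrightarrow> j < b \<Longrightarrow> (- M + P) $$ (i,j) = - (M $$ (i,j)) + P $$ (i,j)"
    if "M \<in> carrier_mat a b" for P M :: "real mat" and a b i j using that by (subst index_add_mat) auto
  have e11: "B11 $$ (0,0) = real l1 - ones l1 \<bullet> (A *\<^sub>v (As *\<^sub>v (transpose_mat A *\<^sub>v ones l1)))"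
  proof -
    have "(transpose_mat E * A * As * transpose_mat A * E) $$ (0,0) = ones l1 \<bullet> (A *\<^sub>v (As *\<^sub>v (transpose_mat A *\<^sub>v ones l1)))"
      using ch5[OF E(2) A Asc AT E(1), of 0 0, unfolded rowE colE] by simp
    thus ?thesis unfolding B11_def by (subst mi[OF mc5[OF E(2) A Asc AT E(1)]]) auto
  qed
  have e12: "B12 $$ (0, j) = 1 - ones l1 \<bullet> (A *\<^sub>v (As *\<^sub>v row XB j))" if j: "j < m1" for j
  proof -
    have "(transpose_mat E * A * As * transpose_mat XB) $$ (0,j) = ones l1 \<bullet> (A *\<^sub>v (As *\<^sub>v row XB j))"
      using ch4[OF E(2) A Asc XBT, of 0 j, unfolded rowE] j XB by simp
    moreover have "transpose_mat E1 $$ (0,j) = 1" using j unfolding E1_def ones_col_def by simp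
    ultimately show ?thesis unfolding B12_def using j by (subst mi[OF mc4[OF E(2) A Asc XBT]]) auto
  qed
  have e13: "B13 $$ (0, j) = 1 - ones l1 \<bullet> (A *\<^sub>v (As *\<^sub>v row XC j))" if j: "j < m2" for j
  proof -
    have "(transpose_mat E * A * As * transpose_mat XC) $$ (0,j) = ones l1 \<bullet> (A *\<^sub>v (As *\<^sub>v row XC j))"
      using ch4[OF E(2) A Asc XCT, of 0 j, unfolded rowE] j XC by simp
    moreover have "transpose_mat E2 $$ (0,j) = 1" using j unfolding E2_def ones_col_def by simp
    ultimately show ?thesis unfolding B13_def using j by (subst mi[OF mc4[OF E(2) A Asc XCT]]) auto
  qed
  have e21: "B21 $$ (i,0) = -1 + row XB i \<bullet> (As *\<^sub>v (transpose_mat A *\<^sub>v ones l1))" if i: "i < m1" for i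
  proof -
    have "(XB * As * transpose_mat A * E) $$ (i,0) = row XB i \<bullet> (As *\<^sub>v (transpose_mat A *\<^sub>v ones l1))"
      using ch4[OF XB Asc AT E(1), of i 0, unfolded colE] i by simp
    moreover have "E1 $$ (i,0) = 1" using i unfolding E1_def ones_col_def by simp
    ultimately show ?thesis unfolding B21_def using i by (subst pl[OF E1(1) mc4[OF XB Asc AT E(1)]]) auto
  qed
  have e31: "B31 $$ (i,0) = -1 + row XC i \<bullet> (As *\<^sub>v (transpose_mat A *\<^sub>v ones l1))" if i: "i < m2" for i
  proof -
    have "(XC * As * transpose_mat A * E) $$ (i,0) = row XC i \<bullet> (As *\<^sub>v (transpose_mat A *\<^sub>v ones l1))"
      using ch4[OF XC Asc AT E(1), of i 0, unfolded colE] i by simp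
    moreover have "E2 $$ (i,0) = 1" using i unfolding E2_def ones_col_def by simp
    ultimately show ?thesis unfolding B31_def using i by (subst pl[OF E2(1) mc4[OF XC Asc AT E(1)]]) auto
  qed
  have e22: "B22 $$ (i, j) = row XB i \<bullet> (As *\<^sub>v row XB j)" if "i < m1" "j < m1" for i j
    unfolding B22_def using ch3[OF XB Asc XBT, of i j] that XB by simp
  have e23: "B23 $$ (i, j) = row XB i \<bullet> (As *\<^sub>v row XC j)" if "i < m1" "j < m2" for i j
    unfolding B23_def using ch3[OF XB Asc XCT, of i j] that XC by simp
  have e32: "B32 $$ (i, j) = row XC i \<bullet> (As *\<^sub>v row XB j)" if "i < m2" "j < m1" for i j
    unfolding B32_def using ch3[OF XC Asc XBT, of i j] that XB by simp
  have e33: "B33 $$ (i, j) = row XC i \<bullet> (As *\<^sub>v row XC j)" if "i < m2" "j < m2" for i j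
    unfolding B33_def using ch3[OF XC Asc XCT, of i j] that XC by simp
  have hc: "hcat Bx1 (hcat Bx2 Bx3) $$ (i,c) = (if c = 0 then Bx1 $$ (i,0) else if c < Suc m1 then Bx2 $$ (i, c - 1) else Bx3 $$ (i, c - Suc m1))"
    if "Bx1 \<in> carrier_mat mm 1" "Bx2 \<in> carrier_mat mm m1" "Bx3 \<in> carrier_mat mm m2" "i < mm" "c < Suc (m1+m2)" for Bx1 Bx2 Bx3 mm i c
    using hcat_index[OF that(1) hcat_carrier[OF that(2,3)], of i c] hcat_index[OF that(2,3), of i "c - 1"] that(4,5)
    by auto
  {
    fix c assume c: "c < Suc (m1+m2)"
    have "Abar A \<delta> XB XC $$ (0,c) = hcat B11 (hcat B12 B13) $$ (0,c)"
      unfolding Aeq using arows_index[OF r1 r23, of 0 c] c by simp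
    also have "\<dots> = (if c = 0 then B11 $$ (0,0) else if c < Suc m1 then B12 $$ (0, c - 1) else B13 $$ (0, c - Suc m1))"
      by (rule hc[OF c11 c12 c13 _ c]) simp
    also have "\<dots> = (if c = 0 then real l1 else 1) - ones l1 \<bullet> (A *\<^sub>v (As *\<^sub>v g c))"
    proof -
      consider "c = 0" | "0 < c" "c < Suc m1" | "Suc m1 \<le> c" by linarith
      then show ?thesis
      proof cases
        case 1 thus ?thesis using e11 unfolding g_def by simp
      next
        case 2 thus ?thesis using e12[of "c - 1"] unfolding g_def by simp
      next
        case 3 thus ?thesis using e13[of "c - Suc m1"] c unfolding g_def by simp
      qed
    qed
    finally show "Abar A \<delta> XB XC $$ (0,c) =
          (if c = 0 then real l1 else 1) - ones l1 \<bullet> (A *\<^sub>v (Astar A \<delta> *\<^sub>v g c))" unfolding As_def .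
  }
  {
    assume r: "0 < r" "r < Suc (m1+m2)" and c: "c < Suc (m1+m2)"
    have "Abar A \<delta> XB XC $$ (r,c) = (hcat B21 (hcat B22 B23) @\<^sub>r hcat B31 (hcat B32 B33)) $$ (r - 1,c)"
      unfolding Aeq using arows_index[OF r1 r23, of r c] c r by simp
    also have "\<dots> = (if r < Suc m1 then hcat B21 (hcat B22 B23) $$ (r - 1, c) else hcat B31 (hcat B32 B33) $$ (r - Suc m1, c))"
      using arows_index[OF r2 r3, of "r - 1" c] c r by auto
    also have "\<dots> = (if c = 0 then -1 else 0) + p r \<bullet> (As *\<^sub>v g c)"
    proof (cases "r < Suc m1")
      case True
      define i where "i = r - 1"
      have i: "i < m1" using True r unfolding i_def by auto
      have h: "hcat B21 (hcat B22 B23) $$ (r - 1, c) = (if c = 0 then B21 $$ (i,0) else if c < Suc m1 then B22 $$ (i, c - 1) else B23 $$ (i, c - Suc m1))"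
        unfolding i_def by (rule hc[OF c21 c22 c23 _ c]) (use i in \<open>simp add: i_def\<close>)
      have pr: "p r = row XB i" unfolding p_def i_def using True by simp
      consider "c = 0" | "0 < c" "c < Suc m1" | "Suc m1 \<le> c" by linarith
      then show ?thesis
      proof cases
        case 1 thus ?thesis using e21[OF i] True h pr unfolding g_def by simp
      next
        case 2 thus ?thesis using e22[OF i, of "c - 1"] True h pr unfolding g_def by simp
      next
        case 3 thus ?thesis using e23[OF i, of "c - Suc m1"] c True h pr unfolding g_def by simp
      qed
    next
      case False
      define i where "i = r - Suc m1"
      have i: "i < m2" using False r unfolding i_def by auto
      have h: "hcat B31 (hcat B32 B33) $$ (r - Suc m1, c) = (if c = 0 then B31 $$ (i,0) else if c < Suc m1 then B32 $$ (i, c - 1) else B33 $$ (i, c - Suc m1))"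
        unfolding i_def by (rule hc[OF c31 c32 c33 _ c]) (use i in \<open>simp add: i_def\<close>)
      have pr: "p r = row XC i" unfolding p_def i_def using False by simp
      consider "c = 0" | "0 < c" "c < Suc m1" | "Suc m1 \<le> c" by linarith
      then show ?thesis
      proof cases
        case 1 thus ?thesis using e31[OF i] False h pr unfolding g_def by simp
      next
        case 2 thus ?thesis using e32[OF i, of "c - 1"] False h pr unfolding g_def by simp
      next
        case 3 thus ?thesis using e33[OF i, of "c - Suc m1"] c False h pr unfolding g_def by simp
      qed
    qed
    finally show "Abar A \<delta> XB XC $$ (r,c) = (if c = 0 then -1 else 0) + p r \<bullet> (Astar A \<delta> *\<^sub>v g c)" unfolding As_def .
  }
qed


lemma mv_sum: "M \<in> carrier_mat N N' \<Longrightarrow> v \<in> carrier_vec N' \<Longrightarrow> r < N \<Longrightarrow> (M *\<^sub>v v) $ r = (\<Sum>c<N'. M $$ (r,c) * v $ c)"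
  by (auto simp: scalar_prod_def atLeast0LessThan intro!: sum.cong)

lemma lin_comb:
  fixes M :: "real mat"
  assumes M: "M \<in> carrier_mat k n" and g: "\<And>c. c \<in> C \<Longrightarrow> g c \<in> carrier_vec n"
  shows "(\<Sum>c\<in>C. y c * (p \<bullet> (M *\<^sub>v g c))) = p \<bullet> (M *\<^sub>v vec n (\<lambda>j. \<Sum>c\<in>C. y c * g c $ j))"
proof -
  have e: "p \<bullet> (M *\<^sub>v v) = (\<Sum>i<k. p $ i * (\<Sum>j<n. M $$ (i,j) * v $ j))" if "v \<in> carrier_vec n" for v
    using M that by (auto simp: scalar_prod_def atLeast0LessThan intro!: sum.cong)
  have "(\<Sum>c\<in>C. y c * (p \<bullet> (M *\<^sub>v g c))) = (\<Sum>c\<in>C. \<Sum>i<k. \<Sum>j<n. y c * (p $ i * (M $$ (i,j) * g c $ j)))"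
    using g by (auto simp: e sum_distrib_left intro!: sum.cong)
  also have "\<dots> = (\<Sum>i<k. \<Sum>c\<in>C. \<Sum>j<n. y c * (p $ i * (M $$ (i,j) * g c $ j)))" by (rule sum.swap)
  also have "\<dots> = (\<Sum>i<k. \<Sum>j<n. \<Sum>c\<in>C. y c * (p $ i * (M $$ (i,j) * g c $ j)))" by (rule sum.cong[OF refl], rule sum.swap)
  also have "\<dots> = p \<bullet> (M *\<^sub>v vec n (\<lambda>j. \<Sum>c\<in>C. y c * g c $ j))"
    by (subst e) (auto simp: sum_distrib_left mult_ac intro!: sum.cong)
  finally show ?thesis .
qed

lemma inv_solve:
  assumes inv: "invertible_mat M" and M: "M \<in> carrier_mat N N" and d: "d \<in> carrier_vec N"
    and b: "b \<in> carrier_vec N" and eq: "M *\<^sub>v d = k \<cdot>\<^sub>v b"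
  shows "d = k \<cdot>\<^sub>v (mat_inv M *\<^sub>v (b :: real vec))"
proof -
  from inv obtain B where B1: "M * B = 1\<^sub>m (dim_row M)" and B2: "B * M = 1\<^sub>m (dim_row B)"
    unfolding invertible_mat_def inverts_mat_def by blast
  have "dim_col B = N" using arg_cong[OF B1, of dim_col] M by simp
  moreover have "dim_row B = N" using arg_cong[OF B2, of dim_col] M by simp
  ultimately have Bc: "B \<in> carrier_mat N N" by auto
  have ex: "\<exists>B. B \<in> carrier_mat (dim_row M) (dim_row M) \<and> inverts_mat M B \<and> inverts_mat B M"
    using Bc B1 B2 M by (intro exI[of _ B]) (auto simp: inverts_mat_def)
  have Bi: "mat_inv M \<in> carrier_mat N N" "mat_inv M * M = 1\<^sub>m N"
    using someI_ex[OF ex] M unfolding mat_inv_def inverts_mat_def by auto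
  have "d = 1\<^sub>m N *\<^sub>v d" using d by simp
  also have "\<dots> = (mat_inv M * M) *\<^sub>v d" using Bi by simp
  also have "\<dots> = mat_inv M *\<^sub>v (M *\<^sub>v d)" by (rule assoc_mult_mat_vec[OF Bi(1) M d])
  also have "\<dots> = k \<cdot>\<^sub>v (mat_inv M *\<^sub>v b)" unfolding eq by (rule mult_mat_vec[OF Bi(1) b])
  finally show ?thesis .
qed

theorem theorem1:
  fixes A :: "real mat" and x2 x3 :: "nat \<Rightarrow> real vec" and l2 l3 :: nat
    and \<epsilon> \<delta> :: "real"
    and a0 :: "real \<Rightarrow> real" and \<alpha> \<beta> :: "real \<Rightarrow> nat \<Rightarrow> real"
    and lam_l lam_l1 :: real
  assumes l1_pos: "dim_row A \<ge> 1"
    and x2_dim: "\<forall>i<l2. x2 i \<in> carrier_vec (dim_col A)"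
    and x3_dim: "\<forall>k<l3. x3 k \<in> carrier_vec (dim_col A)"
    and eps: "0 < \<epsilon>" "\<epsilon> < 1"
    and delta: "0 < \<delta>"
    and path: "\<forall>lam>0. kkt_QPP1 A \<delta> \<epsilon> x2 l2 x3 l3 lam (a0 lam) (\<alpha> lam) (\<beta> lam)"
    and lams: "0 < lam_l1" "lam_l1 < lam_l"
    and const: "\<forall>lam\<in>{lam_l1<..lam_l}.
       (let F = f1 A \<delta> x2 l2 x3 l3 lam (a0 lam) (\<alpha> lam) (\<beta> lam);
            Fl = f1 A \<delta> x2 l2 x3 l3 lam_l (a0 lam_l) (\<alpha> lam_l) (\<beta> lam_l) in
        E_B F x2 l2 = E_B Fl x2 l2 \<and> L_B F x2 l2 = L_B Fl x2 l2 \<and> R_B F x2 l2 = R_B Fl x2 l2 \<and>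
        E_C \<epsilon> F x3 l3 = E_C \<epsilon> Fl x3 l3 \<and> L_C \<epsilon> F x3 l3 = L_C \<epsilon> Fl x3 l3 \<and>
        R_C \<epsilon> F x3 l3 = R_C \<epsilon> Fl x3 l3)"
    and inv: "let Fl = f1 A \<delta> x2 l2 x3 l3 lam_l (a0 lam_l) (\<alpha> lam_l) (\<beta> lam_l);
                  EB = sorted_list_of_set (E_B Fl x2 l2); EC = sorted_list_of_set (E_C \<epsilon> Fl x3 l3);
                  XB = mat_of_rows (dim_col A) (map x2 EB); XC = mat_of_rows (dim_col A) (map x3 EC)
              in invertible_mat (Abar A \<delta> XB XC)"
  shows "let n = dim_col A; l1 = dim_row A;
             F = (\<lambda>lam. f1 A \<delta> x2 l2 x3 l3 lam (a0 lam) (\<alpha> lam) (\<beta> lam));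
             W = (\<lambda>lam. w1 A \<delta> x2 l2 x3 l3 lam (a0 lam) (\<alpha> lam) (\<beta> lam));
             EB = sorted_list_of_set (E_B (F lam_l) x2 l2);
             EC = sorted_list_of_set (E_C \<epsilon> (F lam_l) x3 l3);
             m1 = length EB; m2 = length EC;
             XB = mat_of_rows n (map x2 EB); XC = mat_of_rows n (map x3 EC);
             \<theta> = mat_inv (Abar A \<delta> XB XC) *\<^sub>v bbar \<epsilon> m1 m2;
             h1 = Astar A \<delta> *\<^sub>v (\<theta> $ 0 \<cdot>\<^sub>v (transpose_mat A *\<^sub>v ones l1)
                    + vsum n {..<m1} (\<lambda>j. \<theta> $ (1 + j) \<cdot>\<^sub>v x2 (EB ! j))
                    + vsum n {..<m2} (\<lambda>j. \<theta> $ (1 + m1 + j) \<cdot>\<^sub>v x3 (EC ! j)));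
             h2 = (\<lambda>x. \<theta> $ 0 - x \<bullet> h1)
         in \<forall>lam. lam_l1 < lam \<and> lam < lam_l \<longrightarrow>
              a0 lam = a0 lam_l - (lam_l - lam) * \<theta> $ 0 \<and>
              (\<forall>j<m1. \<alpha> lam (EB ! j) = \<alpha> lam_l (EB ! j) - (lam_l - lam) * \<theta> $ (1 + j)) \<and>
              (\<forall>j<m2. \<beta> lam (EC ! j) = \<beta> lam_l (EC ! j) - (lam_l - lam) * \<theta> $ (1 + m1 + j)) \<and>
              W lam = (lam_l / lam) \<cdot>\<^sub>v (W lam_l + h1) - h1 \<and>
              (\<forall>x\<in>carrier_vec n. F lam x = (lam_l / lam) * (F lam_l x - h2 x) + h2 x)"
proof -
  define n where "n = dim_col A"
  define l1 where "l1 = dim_row A"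
  define As where "As = Astar A \<delta>"
  define u where "u = transpose_mat A *\<^sub>v ones l1"
  define F where "F = (\<lambda>lam. f1 A \<delta> x2 l2 x3 l3 lam (a0 lam) (\<alpha> lam) (\<beta> lam))"
  define W where "W = (\<lambda>lam. w1 A \<delta> x2 l2 x3 l3 lam (a0 lam) (\<alpha> lam) (\<beta> lam))"
  define S where "S = (\<lambda>lam. a0 lam \<cdot>\<^sub>v u + vsum n {..<l2} (\<lambda>i. \<alpha> lam i \<cdot>\<^sub>v x2 i) + vsum n {..<l3} (\<lambda>k. \<beta> lam k \<cdot>\<^sub>v x3 k))"
  define EBs where "EBs = E_B (F lam_l) x2 l2"
  define ECs where "ECs = E_C \<epsilon> (F lam_l) x3 l3"
  define EB where "EB = sorted_list_of_set EBs"
  define EC where "EC = sorted_list_of_set ECs"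
  define m1 where "m1 = length EB"
  define m2 where "m2 = length EC"
  define XB where "XB = mat_of_rows n (map x2 EB)"
  define XC where "XC = mat_of_rows n (map x3 EC)"
  define \<theta> where "\<theta> = mat_inv (Abar A \<delta> XB XC) *\<^sub>v bbar \<epsilon> m1 m2"
  define H where "H = \<theta> $ 0 \<cdot>\<^sub>v u + vsum n {..<m1} (\<lambda>j. \<theta> $ (1 + j) \<cdot>\<^sub>v x2 (EB ! j))
                    + vsum n {..<m2} (\<lambda>j. \<theta> $ (1 + m1 + j) \<cdot>\<^sub>v x3 (EC ! j))"
  define h1 where "h1 = As *\<^sub>v H"
  define h2 where "h2 = (\<lambda>x. \<theta> $ 0 - x \<bullet> h1)"
  define N where "N = Suc (m1 + m2)"
  define g where "g = (\<lambda>c. if c = 0 then transpose_mat A *\<^sub>v ones l1 else if c < Suc m1 then row XB (c - 1) else row XC (c - Suc m1))"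
  define pp where "pp = (\<lambda>r. if r < Suc m1 then row XB (r - 1) else row XC (r - Suc m1))"

  have Ac: "A \<in> carrier_mat l1 n" unfolding l1_def n_def by simp
  have Asc: "As \<in> carrier_mat n n" unfolding As_def using astar_carrier_gen[OF delta Ac] .
  have Asd: "dim_row As = n" "dim_col As = n" using Asc by auto
  have uc: "u \<in> carrier_vec n" unfolding u_def using Ac ones_carrier[of l1]
    by (intro mult_mat_vec_carrier[of _ n l1]) simp_all
  have x2c: "x2 i \<in> carrier_vec n" if "i < l2" for i using x2_dim that unfolding n_def by blast
  have x3c: "x3 k \<in> carrier_vec n" if "k < l3" for k using x3_dim that unfolding n_def by blast
  have x2d: "dim_vec (x2 i) = n" if "i < l2" for i using x2c[OF that] by simp
  have x3d: "dim_vec (x3 k) = n" if "k < l3" for k using x3c[OF that] by simp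
  have vsc: "vsum n I f \<in> carrier_vec n" for I :: "nat set" and f unfolding vsum_def by simp
  have Sc: "S lam \<in> carrier_vec n" for lam unfolding S_def using uc vsc by simp
  have S_idx: "S lam $ j = a0 lam * u $ j + (\<Sum>i<l2. \<alpha> lam i * x2 i $ j) + (\<Sum>k<l3. \<beta> lam k * x3 k $ j)"
    if "j < n" for lam j
    using that uc unfolding S_def vsum_def by (auto simp: x2d x3d intro!: sum.cong)
  have ASc: "As *\<^sub>v S lam \<in> carrier_vec n" for lam using Asc Sc by simp
  have W_eq: "W lam = (- (1 / lam)) \<cdot>\<^sub>v (As *\<^sub>v S lam)" for lam
    unfolding W_def w1_def S_def As_def u_def n_def l1_def ..
  have F_eq: "lam * F lam x = a0 lam - x \<bullet> (As *\<^sub>v S lam)" if "lam > 0" "x \<in> carrier_vec n" for lam x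
  proof -
    have "F lam x = x \<bullet> W lam + a0 lam / lam" unfolding F_def W_def f1_def b1_def ..
    also have "x \<bullet> W lam = (- (1 / lam)) * (x \<bullet> (As *\<^sub>v S lam))"
      unfolding W_eq using that(2) ASc[of lam] Asc by (intro scalar_prod_smult_right) simp
    finally show ?thesis using that(1) by (simp add: field_simps)
  qed

  have K: "kkt_QPP1 A \<delta> \<epsilon> x2 l2 x3 l3 lam (a0 lam) (\<alpha> lam) (\<beta> lam)" if "lam > 0" for lam
    using path that by blast
  have kA: "(- F lam (x2 i) < 1 \<longrightarrow> \<alpha> lam i = 1) \<and> (- F lam (x2 i) > 1 \<longrightarrow> \<alpha> lam i = 0)"
    if "lam > 0" "i < l2" for lam i
  proof -
    have "\<forall>i<l2. (- F lam (x2 i) < 1 \<longrightarrow> \<alpha> lam i = 1) \<and> (- F lam (x2 i) > 1 \<longrightarrow> \<alpha> lam i = 0)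
               \<and> (- F lam (x2 i) = 1 \<longrightarrow> \<alpha> lam i \<in> {0..1})"
      using K[OF that(1)] unfolding kkt_QPP1_def Let_def F_def by (elim conjE) assumption
    thus ?thesis using that(2) by blast
  qed
  have kB: "(- F lam (x3 k) < 1 - \<epsilon> \<longrightarrow> \<beta> lam k = 1) \<and> (- F lam (x3 k) > 1 - \<epsilon> \<longrightarrow> \<beta> lam k = 0)"
    if "lam > 0" "k < l3" for lam k
  proof -
    have "\<forall>k<l3. (- F lam (x3 k) < 1 - \<epsilon> \<longrightarrow> \<beta> lam k = 1) \<and> (- F lam (x3 k) > 1 - \<epsilon> \<longrightarrow> \<beta> lam k = 0)
               \<and> (- F lam (x3 k) = 1 - \<epsilon> \<longrightarrow> \<beta> lam k \<in> {0..1})"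
      using K[OF that(1)] unfolding kkt_QPP1_def Let_def F_def by (elim conjE) assumption
    thus ?thesis using that(2) by blast
  qed
  define c0 where "c0 = real l1 - ones l1 \<bullet> (A *\<^sub>v (As *\<^sub>v u))"
  define ca where "ca = (\<lambda>i. 1 - ones l1 \<bullet> (A *\<^sub>v (As *\<^sub>v x2 i)))"
  define cb where "cb = (\<lambda>k. 1 - ones l1 \<bullet> (A *\<^sub>v (As *\<^sub>v x3 k)))"
  have kC: "c0 * a0 lam + (\<Sum>i<l2. ca i * \<alpha> lam i) + (\<Sum>k<l3. cb k * \<beta> lam k) = 0"
    if "lam > 0" for lam
    using K[OF that] unfolding kkt_QPP1_def Let_def c0_def ca_def cb_def l1_def As_def u_def by (elim conjE) assumption

  have cst: "E_B (F lam) x2 l2 = EBs \<and> L_B (F lam) x2 l2 = L_B (F lam_l) x2 l2 \<and> R_B (F lam) x2 l2 = R_B (F lam_l) x2 l2 \<and>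
        E_C \<epsilon> (F lam) x3 l3 = ECs \<and> L_C \<epsilon> (F lam) x3 l3 = L_C \<epsilon> (F lam_l) x3 l3 \<and>
        R_C \<epsilon> (F lam) x3 l3 = R_C \<epsilon> (F lam_l) x3 l3"
    if "lam_l1 < lam" "lam \<le> lam_l" for lam
  proof -
    have "lam \<in> {lam_l1<..lam_l}" using that by simp
    from const[rule_format, OF this] show ?thesis unfolding Let_def F_def EBs_def ECs_def .
  qed

  have EBs_sub: "EBs \<subseteq> {..<l2}" unfolding EBs_def E_B_def by auto
  have ECs_sub: "ECs \<subseteq> {..<l3}" unfolding ECs_def E_C_def by auto
  have finEB: "finite EBs" using EBs_sub finite_subset by blast
  have finEC: "finite ECs" using ECs_sub finite_subset by blast
  have setEB: "set EB = EBs" "distinct EB" unfolding EB_def using finEB by auto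
  have setEC: "set EC = ECs" "distinct EC" unfolding EC_def using finEC by auto
  have EBj: "EB ! j \<in> EBs" if "j < m1" for j using that setEB unfolding m1_def by (metis nth_mem)
  have ECj: "EC ! j \<in> ECs" if "j < m2" for j using that setEC unfolding m2_def by (metis nth_mem)
  have XBc: "XB \<in> carrier_mat m1 n" unfolding XB_def m1_def using mat_of_rows_carrier(1)[of n "map x2 EB"] by simp
  have XCc: "XC \<in> carrier_mat m2 n" unfolding XC_def m2_def using mat_of_rows_carrier(1)[of n "map x3 EC"] by simp
  have rowXB: "row XB j = x2 (EB ! j)" if "j < m1" for j
    unfolding XB_def using that EBj[OF that] EBs_sub x2c unfolding m1_def
    by (subst mat_of_rows_row) auto
  have rowXC: "row XC j = x3 (EC ! j)" if "j < m2" for j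
    unfolding XC_def using that ECj[OF that] ECs_sub x3c unfolding m2_def
    by (subst mat_of_rows_row) auto
  have x2EBd: "dim_vec (x2 (EB ! t)) = n" if "t < m1" for t using x2d EBj[OF that] EBs_sub by auto
  have x3ECd: "dim_vec (x3 (EC ! t)) = n" if "t < m2" for t using x3d ECj[OF that] ECs_sub by auto
  have gc: "g c \<in> carrier_vec n" if "c < N" for c
  proof -
    have "c = 0 \<or> (0 < c \<and> c < Suc m1) \<or> (Suc m1 \<le> c \<and> c < N)" using that by linarith
    thus ?thesis unfolding g_def using uc[unfolded u_def] XBc XCc that unfolding N_def by auto
  qed
  note AbarE = Abar_entries[OF Ac Asc[unfolded As_def] XBc XCc, folded g_def pp_def As_def]
  have Abc: "Abar A \<delta> XB XC \<in> carrier_mat N N" using AbarE(1) unfolding N_def .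
  have invA: "invertible_mat (Abar A \<delta> XB XC)"
    using inv unfolding Let_def XB_def XC_def EB_def EC_def EBs_def ECs_def F_def n_def .
  have bbc: "bbar \<epsilon> m1 m2 \<in> carrier_vec N" unfolding bbar_def N_def ones_def carrier_vec_def by simp
  have bb0: "bbar \<epsilon> m1 m2 $ 0 = 0" unfolding bbar_def ones_def by simp
  have bb1: "bbar \<epsilon> m1 m2 $ r = 1" if "0 < r" "r < Suc m1" for r
    using that unfolding bbar_def ones_def by simp
  have bb2: "bbar \<epsilon> m1 m2 $ r = 1 - \<epsilon>" if "Suc m1 \<le> r" "r < N" for r
    using that unfolding bbar_def ones_def N_def by simp

  {
    fix lam assume lam: "lam_l1 < lam" "lam < lam_l"
    have lam0: "lam > 0" and laml0: "lam_l > 0" using lam lams by auto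
    note cst_l = cst[OF lam(1) less_imp_le[OF lam(2)]]
    define d0 where "d0 = a0 lam - a0 lam_l"
    define da where "da = (\<lambda>i. \<alpha> lam i - \<alpha> lam_l i)"
    define db where "db = (\<lambda>k. \<beta> lam k - \<beta> lam_l k)"
    have da0: "da i = 0" if "i < l2" "i \<notin> EBs" for i
    proof -
      have ne: "- F lam_l (x2 i) \<noteq> 1" using that unfolding EBs_def E_B_def by auto
      show ?thesis
      proof (cases "- F lam_l (x2 i) < 1")
        case True
        hence "i \<in> L_B (F lam) x2 l2" using cst_l that unfolding L_B_def by auto
        hence "- F lam (x2 i) < 1" unfolding L_B_def by auto
        thus ?thesis using kA[OF lam0 that(1)] kA[OF laml0 that(1)] True unfolding da_def by auto
      next
        case False
        hence gt: "- F lam_l (x2 i) > 1" using ne by auto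
        hence "i \<in> R_B (F lam) x2 l2" using cst_l that unfolding R_B_def by auto
        hence "- F lam (x2 i) > 1" unfolding R_B_def by auto
        thus ?thesis using kA[OF lam0 that(1)] kA[OF laml0 that(1)] gt unfolding da_def by auto
      qed
    qed
    have db0: "db k = 0" if "k < l3" "k \<notin> ECs" for k
    proof -
      have ne: "- F lam_l (x3 k) \<noteq> 1 - \<epsilon>" using that unfolding ECs_def E_C_def by auto
      show ?thesis
      proof (cases "- F lam_l (x3 k) < 1 - \<epsilon>")
        case True
        hence "k \<in> L_C \<epsilon> (F lam) x3 l3" using cst_l that unfolding L_C_def by auto
        hence "- F lam (x3 k) < 1 - \<epsilon>" unfolding L_C_def by auto
        thus ?thesis using kB[OF lam0 that(1)] kB[OF laml0 that(1)] True unfolding db_def by auto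
      next
        case False
        hence gt: "- F lam_l (x3 k) > 1 - \<epsilon>" using ne by auto
        hence "k \<in> R_C \<epsilon> (F lam) x3 l3" using cst_l that unfolding R_C_def by auto
        hence "- F lam (x3 k) > 1 - \<epsilon>" unfolding R_C_def by auto
        thus ?thesis using kB[OF lam0 that(1)] kB[OF laml0 that(1)] gt unfolding db_def by auto
      qed
    qed
    have sumB: "(\<Sum>t<m1. f (EB ! t) * da (EB ! t)) = (\<Sum>i<l2. f i * da i)" for f
    proof -
      have "(\<Sum>t<m1. f (EB ! t) * da (EB ! t)) = (\<Sum>i\<in>EBs. f i * da i)"
        unfolding m1_def using sum_nth_set[OF setEB(2), of "\<lambda>i. f i * da i"] setEB(1) by simp
      also have "\<dots> = (\<Sum>i<l2. f i * da i)"
        by (rule sum.mono_neutral_left) (use EBs_sub da0 in auto)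
      finally show ?thesis .
    qed
    have sumC: "(\<Sum>t<m2. f (EC ! t) * db (EC ! t)) = (\<Sum>k<l3. f k * db k)" for f
    proof -
      have "(\<Sum>t<m2. f (EC ! t) * db (EC ! t)) = (\<Sum>k\<in>ECs. f k * db k)"
        unfolding m2_def using sum_nth_set[OF setEC(2), of "\<lambda>k. f k * db k"] setEC(1) by simp
      also have "\<dots> = (\<Sum>k<l3. f k * db k)"
        by (rule sum.mono_neutral_left) (use ECs_sub db0 in auto)
      finally show ?thesis .
    qed
    define dv where "dv = vec N (\<lambda>c. if c = 0 then d0 else if c < Suc m1 then da (EB ! (c - 1)) else db (EC ! (c - Suc m1)))"
    have dvc: "dv \<in> carrier_vec N" unfolding dv_def by simp
    have dv0: "dv $ 0 = d0" unfolding dv_def N_def by simp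
    have dv1: "dv $ Suc t = da (EB ! t)" if "t < m1" for t unfolding dv_def N_def using that by simp
    have dv2: "dv $ Suc (m1 + t) = db (EC ! t)" if "t < m2" for t unfolding dv_def N_def using that by simp
    define G where "G = vec n (\<lambda>j. \<Sum>c<N. dv $ c * g c $ j)"
    have G_idx: "G $ j = S lam $ j - S lam_l $ j" if j: "j < n" for j
    proof -
      have "G $ j = (\<Sum>c<N. dv $ c * g c $ j)" unfolding G_def using j by simp
      also have "\<dots> = d0 * u $ j + (\<Sum>t<m1. x2 (EB ! t) $ j * da (EB ! t)) + (\<Sum>t<m2. x3 (EC ! t) $ j * db (EC ! t))"
        unfolding N_def sum_split3 using dv0 dv1 dv2 rowXB rowXC by (simp add: g_def u_def mult.commute)
      also have "\<dots> = d0 * u $ j + (\<Sum>i<l2. x2 i $ j * da i) + (\<Sum>k<l3. x3 k $ j * db k)"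
        using sumB[of "\<lambda>i. x2 i $ j"] sumC[of "\<lambda>k. x3 k $ j"] by simp
      also have "\<dots> = S lam $ j - S lam_l $ j"
        unfolding S_idx[OF j] d0_def da_def db_def
        by (simp add: algebra_simps sum_subtractf)
      finally show ?thesis .
    qed
    have Gc: "G \<in> carrier_vec n" unfolding G_def by simp
    have SG: "S lam = S lam_l + G"
      by (rule eq_vecI) (use Sc Gc G_idx in auto)
    have ASG: "As *\<^sub>v S lam = As *\<^sub>v S lam_l + As *\<^sub>v G"
      unfolding SG by (rule mult_add_distrib_mat_vec[OF Asc Sc Gc])
    have sys: "Abar A \<delta> XB XC *\<^sub>v dv = (lam - lam_l) \<cdot>\<^sub>v bbar \<epsilon> m1 m2"
    proof (rule eq_vecI)
      show "dim_vec (Abar A \<delta> XB XC *\<^sub>v dv) = dim_vec ((lam - lam_l) \<cdot>\<^sub>v bbar \<epsilon> m1 m2)"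
        using Abc bbc by simp
      fix r assume "r < dim_vec ((lam - lam_l) \<cdot>\<^sub>v bbar \<epsilon> m1 m2)"
      hence r: "r < N" using bbc by simp
      have lhs: "(Abar A \<delta> XB XC *\<^sub>v dv) $ r = (\<Sum>c<N. Abar A \<delta> XB XC $$ (r,c) * dv $ c)"
        by (rule mv_sum[OF Abc dvc r])
      show "(Abar A \<delta> XB XC *\<^sub>v dv) $ r = ((lam - lam_l) \<cdot>\<^sub>v bbar \<epsilon> m1 m2) $ r"
      proof (cases "r = 0")
        case True
        have "(\<Sum>c<N. Abar A \<delta> XB XC $$ (0,c) * dv $ c) = (\<Sum>c<N. ((if c = 0 then real l1 else 1) - ones l1 \<bullet> (A *\<^sub>v (As *\<^sub>v g c))) * dv $ c)"
          by (rule sum.cong[OF refl]) (use AbarE(2) in \<open>simp add: N_def g_def\<close>)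
        also have "\<dots> = c0 * d0 + (\<Sum>t<m1. ca (EB ! t) * da (EB ! t)) + (\<Sum>t<m2. cb (EC ! t) * db (EC ! t))"
          unfolding N_def sum_split3 using dv0 dv1 dv2 rowXB rowXC
          by (simp add: g_def c0_def ca_def cb_def u_def)
        also have "\<dots> = c0 * d0 + (\<Sum>i<l2. ca i * da i) + (\<Sum>k<l3. cb k * db k)"
          using sumB[of ca] sumC[of cb] by simp
        also have "\<dots> = (c0 * a0 lam + (\<Sum>i<l2. ca i * \<alpha> lam i) + (\<Sum>k<l3. cb k * \<beta> lam k))
             - (c0 * a0 lam_l + (\<Sum>i<l2. ca i * \<alpha> lam_l i) + (\<Sum>k<l3. cb k * \<beta> lam_l k))"
          unfolding d0_def da_def db_def by (simp add: algebra_simps sum_subtractf)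
        also have "\<dots> = 0" using kC[OF lam0] kC[OF laml0] by simp
        finally show ?thesis using lhs True bb0 bbc r by simp
      next
        case False
        have "(\<Sum>c<N. Abar A \<delta> XB XC $$ (r,c) * dv $ c) = (\<Sum>c<N. ((if c = 0 then -1 else 0) + pp r \<bullet> (As *\<^sub>v g c)) * dv $ c)"
          by (rule sum.cong[OF refl]) (use AbarE(3) False r in \<open>simp add: N_def g_def pp_def\<close>)
        also have "\<dots> = (\<Sum>c<N. (if c = 0 then - dv $ c else 0)) + (\<Sum>c<N. dv $ c * (pp r \<bullet> (As *\<^sub>v g c)))"
          unfolding sum.distrib[symmetric] by (rule sum.cong[OF refl]) (simp add: algebra_simps)
        also have "(\<Sum>c<N. (if c = 0 then - dv $ c else 0)) = - d0"
          using dv0 unfolding N_def by (simp add: sum.delta)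
        also have "(\<Sum>c<N. dv $ c * (pp r \<bullet> (As *\<^sub>v g c))) = pp r \<bullet> (As *\<^sub>v G)"
          unfolding G_def lessThan_def[symmetric] by (rule lin_comb[OF Asc]) (use gc in auto)
        also have "pp r \<bullet> (As *\<^sub>v G) = pp r \<bullet> (As *\<^sub>v S lam) - pp r \<bullet> (As *\<^sub>v S lam_l)"
        proof -
          have ppc: "pp r \<in> carrier_vec n" unfolding pp_def using XBc XCc False r unfolding N_def by auto
          have "pp r \<bullet> (As *\<^sub>v S lam) = pp r \<bullet> (As *\<^sub>v S lam_l) + pp r \<bullet> (As *\<^sub>v G)"
            unfolding ASG by (rule scalar_prod_add_distrib[OF ppc]) (use Asc Sc Gc in auto)
          thus ?thesis by simp
        qed
        finally have row_r: "(Abar A \<delta> XB XC *\<^sub>v dv) $ r = - d0 + (pp r \<bullet> (As *\<^sub>v S lam) - pp r \<bullet> (As *\<^sub>v S lam_l))"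
          using lhs by simp
        show ?thesis
        proof (cases "r < Suc m1")
          case True
          define i where "i = EB ! (r - 1)"
          have i: "i \<in> EBs" unfolding i_def using EBj True False by simp
          have pr: "pp r = x2 i" unfolding pp_def i_def using True False rowXB by simp
          have il2: "i < l2" using i EBs_sub by auto
          have e1: "- F lam (x2 i) = 1" using i cst_l unfolding E_B_def by auto
          have e2: "- F lam_l (x2 i) = 1" using i unfolding EBs_def E_B_def by auto
          have "x2 i \<bullet> (As *\<^sub>v S lam) = a0 lam + lam" using F_eq[OF lam0 x2c[OF il2]] e1 by (simp add: algebra_simps)
          moreover have "x2 i \<bullet> (As *\<^sub>v S lam_l) = a0 lam_l + lam_l" using F_eq[OF laml0 x2c[OF il2]] e2 by (simp add: algebra_simps)
          ultimately show ?thesis using row_r pr bb1[OF _ True] False bbc r unfolding d0_def by simp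
        next
          case False2: False
          define k where "k = EC ! (r - Suc m1)"
          have k: "k \<in> ECs" unfolding k_def using ECj False2 r unfolding N_def by simp
          have pr: "pp r = x3 k" unfolding pp_def k_def using False2 r rowXC unfolding N_def by simp
          have kl3: "k < l3" using k ECs_sub by auto
          have e1: "- F lam (x3 k) = 1 - \<epsilon>" using k cst_l unfolding E_C_def by auto
          have e2: "- F lam_l (x3 k) = 1 - \<epsilon>" using k unfolding ECs_def E_C_def by auto
          have "x3 k \<bullet> (As *\<^sub>v S lam) = a0 lam + lam * (1 - \<epsilon>)"
            using F_eq[OF lam0 x3c[OF kl3]] e1 by (simp add: algebra_simps)
          moreover have "x3 k \<bullet> (As *\<^sub>v S lam_l) = a0 lam_l + lam_l * (1 - \<epsilon>)"
            using F_eq[OF laml0 x3c[OF kl3]] e2 by (simp add: algebra_simps)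
          moreover have "((lam - lam_l) \<cdot>\<^sub>v bbar \<epsilon> m1 m2) $ r = (lam - lam_l) * (1 - \<epsilon>)"
            using bb2[of r] False2 r bbc by simp
          ultimately show ?thesis using row_r pr unfolding d0_def
            by (simp add: algebra_simps)
        qed
      qed
    qed
    have dvsol: "dv = (lam - lam_l) \<cdot>\<^sub>v \<theta>"
      unfolding \<theta>_def by (rule inv_solve[OF invA Abc dvc bbc sys])
    have dvi: "dv $ c = (lam - lam_l) * \<theta> $ c" if "c < N" for c
      using dvsol that dvc by (metis carrier_vecD index_smult_vec(1) index_smult_vec(2))
    have C1: "a0 lam = a0 lam_l - (lam_l - lam) * \<theta> $ 0"
      using dvi[of 0] dv0 unfolding d0_def N_def by (simp add: algebra_simps)
    have C2: "\<forall>j<m1. \<alpha> lam (EB ! j) = \<alpha> lam_l (EB ! j) - (lam_l - lam) * \<theta> $ (1 + j)"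
    proof (intro allI impI)
      fix j assume j: "j < m1"
      show "\<alpha> lam (EB ! j) = \<alpha> lam_l (EB ! j) - (lam_l - lam) * \<theta> $ (1 + j)"
        using dvi[of "Suc j"] dv1[OF j] j unfolding da_def N_def by (simp add: algebra_simps)
    qed
    have C3: "\<forall>j<m2. \<beta> lam (EC ! j) = \<beta> lam_l (EC ! j) - (lam_l - lam) * \<theta> $ (1 + m1 + j)"
    proof (intro allI impI)
      fix j assume j: "j < m2"
      show "\<beta> lam (EC ! j) = \<beta> lam_l (EC ! j) - (lam_l - lam) * \<theta> $ (1 + m1 + j)"
        using dvi[of "Suc (m1 + j)"] dv2[OF j] j unfolding db_def N_def by (simp add: algebra_simps)
    qed
    have Hc: "H \<in> carrier_vec n" unfolding H_def using uc vsc by simp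
    have GH: "G = (lam - lam_l) \<cdot>\<^sub>v H"
    proof (rule eq_vecI)
      show "dim_vec G = dim_vec ((lam - lam_l) \<cdot>\<^sub>v H)" using Gc Hc by simp
      fix j assume "j < dim_vec ((lam - lam_l) \<cdot>\<^sub>v H)"
      hence j: "j < n" using Hc by simp
      have "G $ j = (\<Sum>c<N. dv $ c * g c $ j)" unfolding G_def using j by simp
      also have "\<dots> = (lam - lam_l) * (\<Sum>c<N. \<theta> $ c * g c $ j)"
        by (simp add: sum_distrib_left dvi mult.assoc)
      also have "(\<Sum>c<N. \<theta> $ c * g c $ j) = \<theta> $ 0 * u $ j + (\<Sum>t<m1. \<theta> $ Suc t * x2 (EB ! t) $ j)
           + (\<Sum>t<m2. \<theta> $ Suc (m1 + t) * x3 (EC ! t) $ j)"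
        unfolding N_def sum_split3 using rowXB rowXC by (simp add: g_def u_def)
      also have "\<dots> = H $ j"
      proof -
        have s1: "(\<Sum>i<m1. (\<theta> $ Suc i \<cdot>\<^sub>v x2 (EB ! i)) $ j) = (\<Sum>t<m1. \<theta> $ Suc t * x2 (EB ! t) $ j)"
          by (rule sum.cong) (auto simp: x2EBd j)
        have s2: "(\<Sum>i<m2. (\<theta> $ Suc (m1 + i) \<cdot>\<^sub>v x3 (EC ! i)) $ j) = (\<Sum>t<m2. \<theta> $ Suc (m1 + t) * x3 (EC ! t) $ j)"
          by (rule sum.cong) (auto simp: x3ECd j)
        show ?thesis unfolding H_def vsum_def using j uc s1 s2 by (simp add: add.assoc)
      qed
      finally show "G $ j = ((lam - lam_l) \<cdot>\<^sub>v H) $ j" using j Hc by simp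
    qed
    have ASl: "As *\<^sub>v S lam = As *\<^sub>v S lam_l + (lam - lam_l) \<cdot>\<^sub>v h1"
      unfolding ASG GH h1_def by (subst mult_mat_vec[OF Asc Hc]) rule
    have h1c: "h1 \<in> carrier_vec n" unfolding h1_def using Asc Hc by simp
    have C4: "W lam = (lam_l / lam) \<cdot>\<^sub>v (W lam_l + h1) - h1"
    proof (rule eq_vecI)
      show "dim_vec (W lam) = dim_vec ((lam_l / lam) \<cdot>\<^sub>v (W lam_l + h1) - h1)"
        unfolding W_eq using ASc h1c Asd by simp
      fix i assume "i < dim_vec ((lam_l / lam) \<cdot>\<^sub>v (W lam_l + h1) - h1)"
      hence i: "i < n" using h1c by simp
      have w: "W lam $ i = - (1 / lam) * ((As *\<^sub>v S lam_l) $ i + (lam - lam_l) * h1 $ i)"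
        unfolding W_eq ASl using i ASc h1c Asd by simp
      have r: "((lam_l / lam) \<cdot>\<^sub>v (W lam_l + h1) - h1) $ i
          = (lam_l / lam) * (- (1 / lam_l) * (As *\<^sub>v S lam_l) $ i + h1 $ i) - h1 $ i"
        unfolding W_eq using i ASc h1c Asd by simp
      have alg: "- (1 / lam) * (P + (lam - lam_l) * h) = (lam_l / lam) * (- (1 / lam_l) * P + h) - h" for P h
        using lam0 laml0 by (simp add: field_simps)
      show "W lam $ i = ((lam_l / lam) \<cdot>\<^sub>v (W lam_l + h1) - h1) $ i"
        unfolding w r by (rule alg)
    qed
    have C5: "\<forall>x\<in>carrier_vec n. F lam x = (lam_l / lam) * (F lam_l x - h2 x) + h2 x"
    proof
      fix x :: "real vec" assume x: "x \<in> carrier_vec n"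
      have xs: "x \<bullet> (As *\<^sub>v S lam) = x \<bullet> (As *\<^sub>v S lam_l) + (lam - lam_l) * (x \<bullet> h1)"
        unfolding ASl using x ASc h1c Asd by (simp add: scalar_prod_add_distrib[of _ n])
      have f1e: "F lam x = (a0 lam - x \<bullet> (As *\<^sub>v S lam)) / lam" using F_eq[OF lam0 x] lam0 by (simp add: field_simps)
      have f2e: "F lam_l x = (a0 lam_l - x \<bullet> (As *\<^sub>v S lam_l)) / lam_l" using F_eq[OF laml0 x] laml0 by (simp add: field_simps)
      show "F lam x = (lam_l / lam) * (F lam_l x - h2 x) + h2 x"
        unfolding f1e f2e h2_def xs C1 using lam0 laml0 by (simp add: field_simps)
    qed
    note C1 C2 C3 C4 C5
  } note main = this
  have main': "\<forall>lam. lam_l1 < lam \<and> lam < lam_l \<longrightarrow>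
              a0 lam = a0 lam_l - (lam_l - lam) * \<theta> $ 0 \<and>
              (\<forall>j<m1. \<alpha> lam (EB ! j) = \<alpha> lam_l (EB ! j) - (lam_l - lam) * \<theta> $ (1 + j)) \<and>
              (\<forall>j<m2. \<beta> lam (EC ! j) = \<beta> lam_l (EC ! j) - (lam_l - lam) * \<theta> $ (1 + m1 + j)) \<and>
              W lam = (lam_l / lam) \<cdot>\<^sub>v (W lam_l + h1) - h1 \<and>
              (\<forall>x\<in>carrier_vec n. F lam x = (lam_l / lam) * (F lam_l x - h2 x) + h2 x)"
    using main by blast
  show ?thesis
    using main' unfolding Let_def h2_def h1_def H_def \<theta>_def XB_def XC_def m1_def m2_def EB_def EC_def
      EBs_def ECs_def F_def W_def u_def As_def n_def l1_def .
qed

end
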